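(* Let $R$ be a commutative domain, $B=R(t,\sigma,H,J)$, $M$ an $R$-weight $B$-module, $\mathfrak m\in\operatorname{Maxspec}(R)$ and $0\neq w\in M_{\mathfrak m}$. If $B_1w=0$ then $\sigma(\mathfrak m)\in\mathcal S(B)$. If $B_{-1}w=0$ then $\mathfrak m\in\mathcal S(B)$.
   Context: $\Bbbk$ is a field; all algebras are associative unital $\Bbbk$-algebras. For an algebra $R$ and $\sigma\in\operatorname{Aut}_\Bbbk(R)$, $R[t,t^{-1};\sigma]$ is the skew Laurent ring: generated over $R$ by $t,t^{-1}$ with $tt^{-1}=t^{-1}t=1$ and $t^{\pm1}r=\sigma^{\pm1}(r)t^{\pm1}$ for $r\in R$. Given two-sided ideals $H,J$ of $R$, set $I^{(0)}=R$, $I^{(n)}=J\sigma(J)\cdots\sigma^{n-1}(J)$ for $n\ge1$, and $I^{(n)}=\sigma^{-1}(H)\sigma^{-2}(H)\cdots\sigma^{n}(H)$ for $n\le-1$; it is assumed throughout that $I^{(n)}\neq0$ for all $n\in\mathbb Z$. The Bell–Rogalski (BR) algebra is $R(t,\sigma,H,J)=\bigoplus_{n\in\mathbb Z}I^{(n)}t^n\subseteq R[t,t^{-1};\sigma]$; write $B_n=I^{(n)}t^n$. For $R$ commutative, $\mathcal S(B)=\{\mathfrak p\in\operatorname{Spec}(R):\mathfrak p\supseteq HJ\}$. For $R$ a commutative domain, a left $B$-module $M$ is an $R$-weight module if $M=\bigoplus_{\mathfrak m\in\operatorname{Maxspec}(R)}M_{\mathfrak m}$ where $M_{\mathfrak m}=\{v\in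 M:\mathfrak m v=0\}$ and $\dim_{R/\mathfrak m}M_{\mathfrak m}<\infty$ for all $\mathfrak m$. *)

theory Defs
  imports Main
begin

definition is_ideal :: "'r::comm_ring_1 set \<Rightarrow> bool" where
  "is_ideal I \<longleftrightarrow> 0 \<in> I \<and> (\<forall>a\<in>I. \<forall>b\<in>I. a + b \<in> I) \<and> (\<forall>a\<in>I. - a \<in> I)
      \<and> (\<forall>r. \<forall>a\<in>I. r * a \<in> I)"

definition ideal_prod :: "'r::comm_ring_1 set \<Rightarrow> 'r set \<Rightarrow> 'r set" where
  "ideal_prod I J = \<Inter>{K. is_ideal K \<and> {a * b |a b. a \<in> I \<and> b \<in> J} \<subseteq> K}"

definition prime_ideal :: "'r::comm_ring_1 set \<Rightarrow> bool" where
  "prime_ideal P \<longleftrightarrow> is_ideal P \<and> P \<noteq> UNIV \<and> (\<forall>a b. a * b \<in> P \<longrightarrow> a \<in> P \<or> b \<in> P)"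

definition maximal_ideal :: "'r::comm_ring_1 set \<Rightarrow> bool" where
  "maximal_ideal m \<longleftrightarrow> is_ideal m \<and> m \<noteq> UNIV \<and>
      (\<forall>K. is_ideal K \<and> m \<subseteq> K \<longrightarrow> K = m \<or> K = UNIV)"

definition ring_hom_fun :: "('a::ring_1 \<Rightarrow> 'b::ring_1) \<Rightarrow> bool" where
  "ring_hom_fun f \<longleftrightarrow> f 1 = 1 \<and> (\<forall>x y. f (x + y) = f x + f y) \<and> (\<forall>x y. f (x * y) = f x * f y)"

text \<open>\<open>\<sigma>\<close> is a k-algebra automorphism of R, where the k-algebra structure of R is
  given by the structure map \<open>\<phi> : k \<rightarrow> R\<close>.\<close>
definition k_automorphism :: "('k::field \<Rightarrow> 'r::comm_ring_1) \<Rightarrow> ('r \<Rightarrow> 'r) \<Rightarrow> bool" where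
  "k_automorphism \<phi> \<sigma> \<longleftrightarrow> bij \<sigma> \<and> ring_hom_fun \<sigma> \<and> (\<forall>c. \<sigma> (\<phi> c) = \<phi> c)"

definition sig_pow :: "('r \<Rightarrow> 'r) \<Rightarrow> int \<Rightarrow> 'r \<Rightarrow> 'r" where
  "sig_pow \<sigma> n = (if 0 \<le> n then \<sigma> ^^ nat n else (inv \<sigma>) ^^ nat (- n))"

text \<open>Elements are finitely supported coefficient functions \<open>f\<close>, standing for
  \<open>\<Sum>\<^sub>n f n t^n\<close>.\<close>
definition fin_supp :: "(int \<Rightarrow> 'r::zero) \<Rightarrow> bool" where
  "fin_supp f \<longleftrightarrow> finite {n. f n \<noteq> 0}"

definition skew_mono :: "int \<Rightarrow> 'r::zero \<Rightarrow> int \<Rightarrow> 'r" where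
  "skew_mono n r = (\<lambda>k. if k = n then r else 0)"

text \<open>Multiplication: \<open>(a t^i)(b t^j) = a \<sigma>^i(b) t^{i+j}\<close>.\<close>
definition skew_mult :: "('r::comm_ring_1 \<Rightarrow> 'r) \<Rightarrow> (int \<Rightarrow> 'r) \<Rightarrow> (int \<Rightarrow> 'r) \<Rightarrow> int \<Rightarrow> 'r" where
  "skew_mult \<sigma> f g = (\<lambda>n. \<Sum>i\<in>{i. f i \<noteq> 0}. f i * sig_pow \<sigma> i (g (n - i)))"

fun Ipos :: "('r::comm_ring_1 \<Rightarrow> 'r) \<Rightarrow> 'r set \<Rightarrow> nat \<Rightarrow> 'r set" where
  "Ipos \<sigma> J 0 = UNIV"
| "Ipos \<sigma> J (Suc n) = ideal_prod (Ipos \<sigma> J n) (sig_pow \<sigma> (int n) ` J)"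

fun Ineg :: "('r::comm_ring_1 \<Rightarrow> 'r) \<Rightarrow> 'r set \<Rightarrow> nat \<Rightarrow> 'r set" where
  "Ineg \<sigma> H 0 = UNIV"
| "Ineg \<sigma> H (Suc n) = ideal_prod (Ineg \<sigma> H n) (sig_pow \<sigma> (- int (Suc n)) ` H)"

text \<open>\<open>I^{(n)}\<close>: \<open>I^{(0)} = R\<close>, \<open>I^{(n)} = J\<sigma>(J)\<cdots>\<sigma>^{n-1}(J)\<close> for \<open>n \<ge> 1\<close>,
  \<open>I^{(n)} = \<sigma>^{-1}(H)\<sigma>^{-2}(H)\<cdots>\<sigma>^{n}(H)\<close> for \<open>n \<le> -1\<close>.\<close>
definition BR_I :: "('r::comm_ring_1 \<Rightarrow> 'r) \<Rightarrow> 'r set \<Rightarrow> 'r set \<Rightarrow> int \<Rightarrow> 'r set" where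
  "BR_I \<sigma> H J n = (if 0 \<le> n then Ipos \<sigma> J (nat n) else Ineg \<sigma> H (nat (- n)))"

text \<open>The BR algebra \<open>B = \<Oplus>\<^sub>n I^{(n)} t^n \<subseteq> R[t,t^{-1};\<sigma>]\<close>.\<close>
definition BR_alg :: "('r::comm_ring_1 \<Rightarrow> 'r) \<Rightarrow> 'r set \<Rightarrow> 'r set \<Rightarrow> (int \<Rightarrow> 'r) set" where
  "BR_alg \<sigma> H J = {f. fin_supp f \<and> (\<forall>n. f n \<in> BR_I \<sigma> H J n)}"

definition BR_comp :: "('r::comm_ring_1 \<Rightarrow> 'r) \<Rightarrow> 'r set \<Rightarrow> 'r set \<Rightarrow> int \<Rightarrow> (int \<Rightarrow> 'r) set" where
  "BR_comp \<sigma> H J n = {skew_mono n a |a. a \<in> BR_I \<sigma> H J n}"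

definition BR_S :: "'r::comm_ring_1 set \<Rightarrow> 'r set \<Rightarrow> 'r set set" where
  "BR_S H J = {p. prime_ideal p \<and> ideal_prod H J \<subseteq> p}"

definition left_module :: "('r::comm_ring_1 \<Rightarrow> 'r) \<Rightarrow> (int \<Rightarrow> 'r) set \<Rightarrow>
    ((int \<Rightarrow> 'r) \<Rightarrow> 'm::ab_group_add \<Rightarrow> 'm) \<Rightarrow> bool" where
  "left_module \<sigma> B act \<longleftrightarrow>
     (\<forall>f\<in>B. \<forall>v w. act f (v + w) = act f v + act f w)
   \<and> (\<forall>f\<in>B. \<forall>g\<in>B. \<forall>v. act (\<lambda>n. f n + g n) v = act f v + act g v)
   \<and> (\<forall>f\<in>B. \<forall>g\<in>B. \<forall>v. act (skew_mult \<sigma> f g) v = act f (act g v))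
   \<and> (\<forall>v. act (skew_mono 0 1) v = v)"

text \<open>\<open>M_\<mm> = {v \<in> M. \<mm> v = 0}\<close> (R acting through \<open>R = B_0\<close>).\<close>
definition weight_space :: "((int \<Rightarrow> 'r::comm_ring_1) \<Rightarrow> 'm::ab_group_add \<Rightarrow> 'm) \<Rightarrow> 'r set \<Rightarrow> 'm set" where
  "weight_space act m = {v. \<forall>r\<in>m. act (skew_mono 0 r) v = 0}"

text \<open>\<open>R\<close>-span (= \<open>R/\<mm>\<close>-span on \<open>M_\<mm>\<close>) of a finite set.\<close>
definition R_span :: "((int \<Rightarrow> 'r::comm_ring_1) \<Rightarrow> 'm::ab_group_add \<Rightarrow> 'm) \<Rightarrow> 'm set \<Rightarrow> 'm set" where
  "R_span act S = {\<Sum>s\<in>S. act (skew_mono 0 (c s)) s |c. True}"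

text \<open>\<open>M = \<Oplus>\<^sub>\<mm> M_\<mm>\<close> over maximal ideals, with each \<open>M_\<mm>\<close> finite-dimensional
  over \<open>R/\<mm>\<close> (i.e. spanned by finitely many vectors).\<close>
definition R_weight_module :: "((int \<Rightarrow> 'r::comm_ring_1) \<Rightarrow> 'm::ab_group_add \<Rightarrow> 'm) \<Rightarrow> bool" where
  "R_weight_module act \<longleftrightarrow>
     (\<forall>v. \<exists>F g. finite F \<and> (\<forall>m\<in>F. maximal_ideal m \<and> g m \<in> weight_space act m)
              \<and> v = (\<Sum>m\<in>F. g m))
   \<and> (\<forall>F g. finite F \<and> (\<forall>m\<in>F. maximal_ideal m \<and> g m \<in> weight_space act m)
              \<and> (\<Sum>m\<in>F. g m) = 0 \<longrightarrow> (\<forall>m\<in>F. g m = 0))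
   \<and> (\<forall>m. maximal_ideal m \<longrightarrow>
        (\<exists>S. finite S \<and> S \<subseteq> weight_space act m \<and> weight_space act m \<subseteq> R_span act S))"

end

theory Submission
  imports Defs
begin

lemma hom0: "ring_hom_fun f \<Longrightarrow> f 0 = 0"
  unfolding ring_hom_fun_def by (metis add_cancel_right_right add_0)

lemma homneg: "ring_hom_fun f \<Longrightarrow> f (- x) = - f x"
proof -
  assume h: "ring_hom_fun f"
  have "f (x + - x) = f x + f (-x)" using h unfolding ring_hom_fun_def by blast
  then show ?thesis using hom0[OF h] by (simp add: eq_neg_iff_add_eq_0 add.commute)
qed

lemma inv_hom: assumes b: "bij s" and h: "ring_hom_fun s" shows "ring_hom_fun (inv s)"
proof -
  have inj: "inj s" using b bij_def by blast
  have sur: "\<And>x. s (inv s x) = x" using b by (meson bij_is_surj surj_f_inv_f)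
  have "inv s 1 = 1" using h inj unfolding ring_hom_fun_def by (metis inv_f_f)
  moreover have "\<And>x y. inv s (x + y) = inv s x + inv s y"
  proof -
    fix x y
    have "s (inv s x + inv s y) = x + y" using h sur unfolding ring_hom_fun_def by simp
    then show "inv s (x + y) = inv s x + inv s y" using inj by (metis inv_f_f)
  qed
  moreover have "\<And>x y. inv s (x * y) = inv s x * inv s y"
  proof -
    fix x y
    have "s (inv s x * inv s y) = x * y" using h sur unfolding ring_hom_fun_def by simp
    then show "inv s (x * y) = inv s x * inv s y" using inj by (metis inv_f_f)
  qed
  ultimately show ?thesis unfolding ring_hom_fun_def by blast
qed

lemma ideal_prod_le: "is_ideal K \<Longrightarrow> (\<forall>a\<in>I. \<forall>b\<in>J. a*b\<in>K) \<Longrightarrow> ideal_prod I J \<subseteq> K"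
  unfolding ideal_prod_def by blast

lemma ideal_prod_UNIV: "X \<subseteq> ideal_prod UNIV X"
proof
  fix x assume "x \<in> X"
  then have "x \<in> {a * b |a b. a \<in> UNIV \<and> b \<in> X}" by (metis (mono_tags, lifting) UNIV_I mem_Collect_eq mult_1)
  then show "x \<in> ideal_prod UNIV X" unfolding ideal_prod_def by blast
qed

lemma ideal_prod_0: "0 \<in> ideal_prod I J"
  unfolding ideal_prod_def is_ideal_def by blast

lemma BR_I_0: "0 \<in> BR_I s H J n"
proof (cases "0 \<le> n")
  case True
  then show ?thesis unfolding BR_I_def by (cases "nat n") (auto simp: ideal_prod_0)
next
  case False
  then show ?thesis unfolding BR_I_def by (cases "nat (-n)") (auto simp: ideal_prod_0)
qed

lemma mono_in: "a \<in> BR_I s H J n \<Longrightarrow> skew_mono n a \<in> BR_alg s H J"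
proof -
  assume a: "a \<in> BR_I s H J n"
  have "finite {k. skew_mono n a k \<noteq> 0}"
    by (rule finite_subset[of _ "{n}"]) (auto simp: skew_mono_def)
  moreover have "\<forall>k. skew_mono n a k \<in> BR_I s H J k"
    using a BR_I_0 by (auto simp: skew_mono_def)
  ultimately show ?thesis unfolding BR_alg_def fin_supp_def by blast
qed

lemma BR_I_1: "J \<subseteq> BR_I s H J 1"
proof -
  have "BR_I s H J 1 = Ipos s J (Suc 0)" unfolding BR_I_def by simp
  also have "\<dots> = ideal_prod UNIV J" by (simp add: sig_pow_def)
  finally show ?thesis using ideal_prod_UNIV by blast
qed

lemma BR_I_m1: "inv s ` H \<subseteq> BR_I s H J (-1)"
proof -
  have "BR_I s H J (-1) = Ineg s H (Suc 0)" unfolding BR_I_def by simp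
  also have "\<dots> = ideal_prod UNIV (inv s ` H)" by (simp add: sig_pow_def)
  finally show ?thesis using ideal_prod_UNIV by blast
qed

lemma skew_mult_mono:
  assumes "a \<noteq> 0" "sig_pow s i 0 = 0"
  shows "skew_mult s (skew_mono i a) (skew_mono j b) = skew_mono (i+j) (a * sig_pow s i b)"
proof
  fix n
  have "{k. skew_mono i a k \<noteq> 0} = {i}" using assms(1) by (auto simp: skew_mono_def)
  then show "skew_mult s (skew_mono i a) (skew_mono j b) n = skew_mono (i+j) (a * sig_pow s i b) n"
    using assms(2) by (auto simp: skew_mult_def skew_mono_def)
qed

lemma maximal_prime:
  fixes m :: "'r::comm_ring_1 set"
  assumes mx: "maximal_ideal m" shows "prime_ideal m"
proof -
  have im: "is_ideal m" and nu: "m \<noteq> UNIV" using mx maximal_ideal_def by auto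
  have "\<forall>a b. a * b \<in> m \<longrightarrow> a \<in> m \<or> b \<in> m"
  proof (intro allI impI)
    fix a b assume ab: "a * b \<in> m"
    show "a \<in> m \<or> b \<in> m"
    proof (cases "a \<in> m")
      case True then show ?thesis by blast
    next
      case False
      define K where "K = {x + r * a |x r. x \<in> m}"
      have "is_ideal K" unfolding is_ideal_def K_def
      proof (intro conjI ballI allI)
        show "0 \<in> {x + r * a |x r. x \<in> m}" using im unfolding is_ideal_def
          by (metis (mono_tags, lifting) add_0 mem_Collect_eq mult_zero_left)
      next
        fix p q assume "p \<in> {x + r * a |x r. x \<in> m}" "q \<in> {x + r * a |x r. x \<in> m}"
        then obtain x r y t where "x \<in> m" "y \<in> m" "p = x + r*a" "q = y + t*a" by blast
        then show "p + q \<in> {x + r * a |x r. x \<in> m}" using im unfolding is_ideal_def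
          by (smt (verit, best) add.assoc add.left_commute distrib_right mem_Collect_eq)
      next
        fix p assume "p \<in> {x + r * a |x r. x \<in> m}"
        then obtain x r where "x \<in> m" "p = x + r*a" by blast
        then show "- p \<in> {x + r * a |x r. x \<in> m}" using im unfolding is_ideal_def
          by (smt (verit, best) minus_add_distrib minus_mult_left mem_Collect_eq)
      next
        fix s p assume "p \<in> {x + r * a |x r. x \<in> m}"
        then obtain x r where "x \<in> m" "p = x + r*a" by blast
        then show "s * p \<in> {x + r * a |x r. x \<in> m}" using im unfolding is_ideal_def
          by (smt (verit, best) distrib_left mult.assoc mem_Collect_eq)
      qed
      moreover have "m \<subseteq> K" unfolding K_def by (smt (verit) add_0_right mem_Collect_eq mult_zero_left subsetI)
      moreover have "a \<in> K" unfolding K_def using im unfolding is_ideal_def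
        by (metis (mono_tags, lifting) add_0 mem_Collect_eq mult_1)
      ultimately have "K = UNIV" using mx False unfolding maximal_ideal_def by blast
      then obtain x r where x: "x \<in> m" "1 = x + r * a" unfolding K_def by blast
      then have "b = b * x + r * (a * b)" by (metis mult.commute mult.left_commute distrib_left mult_1_right)
      moreover have "b * x \<in> m" "r * (a*b) \<in> m" using im x ab unfolding is_ideal_def
        by (auto simp: mult.commute)
      ultimately show ?thesis using im unfolding is_ideal_def by metis
    qed
  qed
  then show ?thesis using im nu prime_ideal_def by blast
qed

lemma image_prime:
  fixes m :: "'r::comm_ring_1 set"
  assumes p: "prime_ideal m" and b: "bij s" and h: "ring_hom_fun s"
  shows "prime_ideal (s ` m)"
proof -
  have inj: "inj s" using b bij_def by blast
  have sur: "\<And>x. s (inv s x) = x" using b by (meson bij_is_surj surj_f_inv_f)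
  have im: "is_ideal m" and nu: "m \<noteq> UNIV" using p prime_ideal_def by auto
  have hs: "s 1 = 1" "\<And>x y. s (x+y) = s x + s y" "\<And>x y. s (x*y) = s x * s y"
    using h unfolding ring_hom_fun_def by auto
  have "is_ideal (s ` m)" unfolding is_ideal_def
  proof (intro conjI ballI allI)
    have "0 \<in> m" using im unfolding is_ideal_def by blast
    then have "s 0 \<in> s ` m" by blast
    then show "0 \<in> s ` m" using hom0[OF h] by simp
  next
    fix a b assume "a \<in> s ` m" "b \<in> s ` m"
    then obtain x y where "x \<in> m" "y \<in> m" "a = s x" "b = s y" by blast
    moreover have "x + y \<in> m" using im calculation unfolding is_ideal_def by blast
    ultimately show "a + b \<in> s ` m" using hs(2)[of x y] by (metis image_eqI)
  next
    fix a assume "a \<in> s ` m"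
    then obtain x where "x \<in> m" "a = s x" by blast
    moreover have "- x \<in> m" using im calculation unfolding is_ideal_def by blast
    ultimately show "- a \<in> s ` m" using homneg[OF h, of x] by (metis image_eqI)
  next
    fix r a assume "a \<in> s ` m"
    then obtain x where "x \<in> m" "a = s x" by blast
    then have "r * a = s (inv s r * x)" using hs sur by simp
    then show "r * a \<in> s ` m" using im \<open>x \<in> m\<close> unfolding is_ideal_def by blast
  qed
  moreover have "s ` m \<noteq> UNIV"
  proof
    assume "s ` m = UNIV"
    then have "UNIV = inv s ` s ` m" by (metis b bij_betw_def bij_imp_bij_inv)
    also have "\<dots> = m" using inj by (simp add: image_comp)
    finally show False using nu by simp
  qed
  moreover have "\<forall>a b. a * b \<in> s ` m \<longrightarrow> a \<in> s ` m \<or> b \<in> s ` m"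
  proof (intro allI impI)
    fix a b assume "a * b \<in> s ` m"
    then obtain x where x: "x \<in> m" "a * b = s x" by blast
    have "s (inv s a * inv s b) = s x" using x hs sur by simp
    then have "inv s a * inv s b \<in> m" using inj x by (metis injD)
    then have "inv s a \<in> m \<or> inv s b \<in> m" using p prime_ideal_def by blast
    then show "a \<in> s ` m \<or> b \<in> s ` m" using sur by (metis imageI)
  qed
  ultimately show ?thesis unfolding prime_ideal_def by blast
qed

theorem corollary3p2:
  fixes \<phi> :: "'k::field \<Rightarrow> 'r::idom"
    and \<sigma> :: "'r \<Rightarrow> 'r"
    and H J :: "'r set"
    and act :: "(int \<Rightarrow> 'r) \<Rightarrow> 'm::ab_group_add \<Rightarrow> 'm"
    and m :: "'r set"
    and w :: 'm
  assumes "ring_hom_fun \<phi>"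
    and "k_automorphism \<phi> \<sigma>"
    and "is_ideal H" and "is_ideal J"
    and "\<forall>n. BR_I \<sigma> H J n \<noteq> {0}"
    and "left_module \<sigma> (BR_alg \<sigma> H J) act"
    and "R_weight_module act"
    and "maximal_ideal m"
    and "w \<in> weight_space act m" and "w \<noteq> 0"
  shows "((\<forall>b\<in>BR_comp \<sigma> H J 1. act b w = 0) \<longrightarrow> \<sigma> ` m \<in> BR_S H J)
       \<and> ((\<forall>b\<in>BR_comp \<sigma> H J (-1). act b w = 0) \<longrightarrow> m \<in> BR_S H J)"
proof -
  note lm = assms(6)[unfolded left_module_def]
  have bij: "bij \<sigma>" and hs: "ring_hom_fun \<sigma>" using assms(2) k_automorphism_def by auto
  have hi: "ring_hom_fun (inv \<sigma>)" using inv_hom[OF bij hs] .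
  have inj: "inj \<sigma>" using bij bij_def by blast
  have sur: "\<And>x. \<sigma> (inv \<sigma> x) = x" using bij by (meson bij_is_surj surj_f_inv_f)
  let ?B = "BR_alg \<sigma> H J"
  have mono0: "\<And>r. skew_mono 0 r \<in> ?B" by (rule mono_in) (simp add: BR_I_def)
  have act0: "\<And>f. f \<in> ?B \<Longrightarrow> act f 0 = 0"
  proof -
    fix f assume "f \<in> ?B"
    then have "act f (0 + 0) = act f 0 + act f 0" using lm by blast
    then show "act f 0 = 0" by simp
  qed
  define A where "A = {r. act (skew_mono 0 r) w = 0}"
  have sumono: "\<And>r s::'r. (\<lambda>n. skew_mono 0 r n + skew_mono 0 s n) = skew_mono 0 (r + s)"
    by (rule ext) (simp add: skew_mono_def)
  have actadd: "\<And>r s. act (skew_mono 0 (r + s)) w = act (skew_mono 0 r) w + act (skew_mono 0 s) w"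
    using lm mono0 sumono by metis
  have A0: "0 \<in> A" using actadd[of 0 0] unfolding A_def by simp
  have "is_ideal A" unfolding is_ideal_def
  proof (intro conjI ballI allI)
    show "0 \<in> A" by (rule A0)
  next
    fix a b assume "a \<in> A" "b \<in> A" then show "a + b \<in> A" using actadd unfolding A_def by simp
  next
    fix a assume "a \<in> A" then show "- a \<in> A" using actadd[of "-a" a] A0 unfolding A_def by simp
  next
    fix r a assume a: "a \<in> A"
    show "r * a \<in> A"
    proof (cases "r = 0")
      case True then show ?thesis using A0 by simp
    next
      case False
      have "skew_mult \<sigma> (skew_mono 0 r) (skew_mono 0 a) = skew_mono 0 (r * a)"
        using skew_mult_mono[OF False, of \<sigma> 0 0 a] by (simp add: sig_pow_def)
      then have "act (skew_mono 0 (r*a)) w = act (skew_mono 0 r) (act (skew_mono 0 a) w)"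
        using lm mono0 by metis
      then show ?thesis using a act0 mono0 unfolding A_def by simp
    qed
  qed
  moreover have "m \<subseteq> A" using assms(9) unfolding weight_space_def A_def by blast
  moreover have "1 \<notin> A" using lm assms(10) unfolding A_def by simp
  ultimately have Am: "A = m" using assms(8) unfolding maximal_ideal_def by blast
  have im: "is_ideal m" using assms(8) maximal_ideal_def by blast
  have pm: "prime_ideal m" using maximal_prime[OF assms(8)] .
  have psm: "prime_ideal (\<sigma> ` m)" using image_prime[OF pm bij hs] .
  have m0: "0 \<in> m" using im is_ideal_def by blast
  have sp1: "sig_pow \<sigma> 1 = \<sigma>" by (simp add: sig_pow_def)
  have spm1: "sig_pow \<sigma> (-1) = inv \<sigma>" by (simp add: sig_pow_def)
  show ?thesis
  proof (intro conjI impI)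
    assume b1: "\<forall>b\<in>BR_comp \<sigma> H J 1. act b w = 0"
    have "\<forall>h\<in>H. \<forall>j\<in>J. h * j \<in> \<sigma> ` m"
    proof (intro ballI)
      fix h j assume h: "h \<in> H" and j: "j \<in> J"
      show "h * j \<in> \<sigma> ` m"
      proof (cases "h = 0")
        case True then show ?thesis using m0 hom0[OF hs] by force
      next
        case False
        have a0: "inv \<sigma> h \<noteq> 0" using False sur hom0[OF hs] by metis
        have j1: "j \<in> BR_I \<sigma> H J 1" using BR_I_1 j by blast
        have jc: "skew_mono 1 j \<in> BR_comp \<sigma> H J 1" using j1 unfolding BR_comp_def by blast
        have hB: "skew_mono (-1) (inv \<sigma> h) \<in> ?B" using mono_in BR_I_m1 h by blast
        have "skew_mult \<sigma> (skew_mono (-1) (inv \<sigma> h)) (skew_mono 1 j) = skew_mono 0 (inv \<sigma> h * inv \<sigma> j)"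
          using skew_mult_mono[OF a0, of \<sigma> "-1" 1 j] spm1 hom0[OF hi] by simp
        also have "\<dots> = skew_mono 0 (inv \<sigma> (h * j))" using hi ring_hom_fun_def by metis
        finally have "act (skew_mono 0 (inv \<sigma> (h * j))) w = act (skew_mono (-1) (inv \<sigma> h)) (act (skew_mono 1 j) w)"
          using lm hB mono_in[OF j1] by metis
        then have "inv \<sigma> (h * j) \<in> A" using b1 jc act0 hB unfolding A_def by simp
        then show ?thesis using Am sur by (metis imageI)
      qed
    qed
    then have "ideal_prod H J \<subseteq> \<sigma> ` m" using ideal_prod_le psm prime_ideal_def by blast
    then show "\<sigma> ` m \<in> BR_S H J" using psm BR_S_def by blast
  next
    assume b1: "\<forall>b\<in>BR_comp \<sigma> H J (-1). act b w = 0"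
    have "\<forall>h\<in>H. \<forall>j\<in>J. h * j \<in> m"
    proof (intro ballI)
      fix h j assume h: "h \<in> H" and j: "j \<in> J"
      show "h * j \<in> m"
      proof (cases "j = 0")
        case True then show ?thesis using m0 by simp
      next
        case False
        have j1: "j \<in> BR_I \<sigma> H J 1" using BR_I_1 j by blast
        have hI: "inv \<sigma> h \<in> BR_I \<sigma> H J (-1)" using BR_I_m1 h by blast
        have hc: "skew_mono (-1) (inv \<sigma> h) \<in> BR_comp \<sigma> H J (-1)" using hI unfolding BR_comp_def by blast
        have "skew_mult \<sigma> (skew_mono 1 j) (skew_mono (-1) (inv \<sigma> h)) = skew_mono 0 (j * \<sigma> (inv \<sigma> h))"
          using skew_mult_mono[OF False, of \<sigma> 1 "-1" "inv \<sigma> h"] sp1 hom0[OF hs] by simp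
        also have "\<dots> = skew_mono 0 (h * j)" using sur by (simp add: mult.commute)
        finally have "act (skew_mono 0 (h * j)) w = act (skew_mono 1 j) (act (skew_mono (-1) (inv \<sigma> h)) w)"
          using lm mono_in[OF hI] mono_in[OF j1] by metis
        then have "h * j \<in> A" using b1 hc act0 mono_in[OF j1] unfolding A_def by simp
        then show ?thesis using Am by simp
      qed
    qed
    then have "ideal_prod H J \<subseteq> m" using ideal_prod_le im by blast
    then show "m \<in> BR_S H J" using pm BR_S_def by blast
  qed
qed

end
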